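(* Consider the all-but-one private sequencing scheme described in the context, with $M\ge 2$ unknown individuals, $K$ known individuals, $S=M$ sequencers, constant coverage depth $\alpha\in\mathbb{N}$ and per-read error probability $\eta\in(0,1)$, $\eta\neq 1/2$. Let $\epsilon\in(0,1)$. If $$\frac{\alpha}{M+K-1}\;\ge\;\frac{8\eta(1-\eta)}{(1-2\eta)^2}\,\ln\!\left(\frac{2^M}{\epsilon}\right),$$ then the reconstruction condition holds: the data collector's estimate $\hat{\mathbf{x}}_n$ satisfies $\mathbb{P}(\hat{\mathbf{x}}_n\neq\mathbf{x}_n)\le\epsilon$ for every SNP position $n\in[N]$.
   Context: Setting. There are $M$ unknown individuals and $K$ known individuals, $N$ SNP positions, and $S=M$ non-colluding sequencers. The genome of unknown individual $m$ at SNP position $n$ is $X_{m,n}\in\{-1,1\}$ (major allele $=1$, minor $=-1$), and $\mathbf{x}_n=(X_{1,n},\dots,X_{M,n})^T$. The known individuals' alleles $y_{k,n}\in\{-1,1\}$ are known to the data collector. In the all-but-one scheme, sequencer $s$ receives (pooled, untagged) DNA fragments of all unknown individuals except individual $s$ and of all $K$ known individuals; each fragment contains exactly one SNP and is correctly mapped to its position; each individual $m\neq s$ and each known individual has exactly $\alpha$ fragments covering each SNP position at sequencer $s$ (constant coverage depth $\alpha$). Each sequencer reads every allele in every fragment independently with error probability $\eta$ (flipping $1\leftrightarrow-1$) and reports the reads to the data collector. Model of the data collector's observations used by the paper: after scaling the sum of reads at position $n$ from sequencer $s$ by $1/(\alpha(1-2\eta))$ and subtracting $\sum_k y_{k,n}$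 (with the Gaussian/central-limit approximation of the read noise), the data collector observes $$\mathbf{g}_n=\mathbf{H}\mathbf{x}_n+\mathbf{z}_n,\qquad \mathbf{H}=\mathbf{1}_{M\times M}-\mathbf{I}_{M\times M},$$ where $\mathbf{1}$ is the all-ones matrix, $\mathbf{z}_n\sim\mathcal{N}(0,\sigma^2\mathbf{I})$ is independent of $\mathbf{x}_n$, and $\sigma^2=\frac{4(M+K-1)}{\alpha}\frac{\eta(1-\eta)}{(1-2\eta)^2}$. The data collector estimates $\hat{\mathbf{x}}_n=\arg\min_{\mathbf{u}\in\{-1,1\}^M}\|\mathbf{g}_n-\mathbf{H}\mathbf{u}\|_2$. *)

theory Defs
  imports "HOL-Probability.Probability"
begin

text \<open>Vectors in R^M are functions nat => real, extensional outside {..<M}.\<close>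

definition sign_vectors :: "nat \<Rightarrow> (nat \<Rightarrow> real) set" where
  "sign_vectors M = PiE {..<M} (\<lambda>_. {-1, 1})"

text \<open>Matrix H = 1_{MxM} - I_{MxM} applied to a vector u.\<close>
definition Hmul :: "nat \<Rightarrow> (nat \<Rightarrow> real) \<Rightarrow> (nat \<Rightarrow> real)" where
  "Hmul M u = (\<lambda>i. if i < M then (\<Sum>j<M. u j) - u i else 0)"

definition sqdist :: "nat \<Rightarrow> (nat \<Rightarrow> real) \<Rightarrow> (nat \<Rightarrow> real) \<Rightarrow> real" where
  "sqdist M a b = (\<Sum>i<M. (a i - b i)\<^sup>2)"

definition noise_var :: "nat \<Rightarrow> nat \<Rightarrow> nat \<Rightarrow> real \<Rightarrow> real" where
  "noise_var M K \<alpha> \<eta> = 4 * (real (M + K) - 1) / real \<alpha> * (\<eta> * (1 - \<eta>) / (1 - 2 * \<eta>)\<^sup>2)"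

text \<open>Distribution of the noise z ~ N(0, sigma^2 I) on R^M (sigma = standard deviation).\<close>
definition noise_measure :: "nat \<Rightarrow> real \<Rightarrow> (nat \<Rightarrow> real) measure" where
  "noise_measure M \<sigma> = PiM {..<M} (\<lambda>_. density lborel (normal_density 0 \<sigma>))"

definition observation :: "nat \<Rightarrow> (nat \<Rightarrow> real) \<Rightarrow> (nat \<Rightarrow> real) \<Rightarrow> (nat \<Rightarrow> real)" where
  "observation M x z = (\<lambda>i. Hmul M x i + z i)"

text \<open>Decoding error event of the minimum-distance estimator
  argmin_{u in {-1,1}^M} ||g - H u||: the error event {x_hat /= x} occurs
  (for some choice of minimiser) iff the true x is not the unique minimiser.\<close>
definition decoding_error_event :: "nat \<Rightarrow> (nat \<Rightarrow> real) \<Rightarrow> (nat \<Rightarrow> real) set" where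
  "decoding_error_event M x =
     {z \<in> space (PiM {..<M} (\<lambda>_. lborel :: real measure)).
        \<exists>u \<in> sign_vectors M. u \<noteq> x \<and>
          sqdist M (observation M x z) (Hmul M u) \<le> sqdist M (observation M x z) (Hmul M x)}"

end

theory Submission
  imports Defs
begin

lemma mgf_normal:
  fixes \<sigma> s :: real assumes "0 < \<sigma>"
  shows "(\<integral>\<^sup>+y. ennreal (exp (s*y)) \<partial>density lborel (normal_density 0 \<sigma>))
     = ennreal (exp (s\<^sup>2*\<sigma>\<^sup>2/2))"
proof -
  have eq: "normal_density 0 \<sigma> y * exp (s*y) = exp (s\<^sup>2*\<sigma>\<^sup>2/2) * normal_density (s*\<sigma>\<^sup>2) \<sigma> y" for y
  proof -
    have "-(y-0)\<^sup>2/(2*\<sigma>\<^sup>2) + s*y = s\<^sup>2*\<sigma>\<^sup>2/2 + -(y - s*\<sigma>\<^sup>2)\<^sup>2/(2*\<sigma>\<^sup>2)"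
      using assms by (simp add: field_simps power2_eq_square)
    then have "exp (-(y-0)\<^sup>2/(2*\<sigma>\<^sup>2)) * exp (s*y) = exp (s\<^sup>2*\<sigma>\<^sup>2/2) * exp (-(y - s*\<sigma>\<^sup>2)\<^sup>2/(2*\<sigma>\<^sup>2))"
      by (simp add: mult_exp_exp)
    then show ?thesis unfolding normal_density_def by (simp add: algebra_simps)
  qed
  have "(\<integral>\<^sup>+y. ennreal (exp (s*y)) \<partial>density lborel (normal_density 0 \<sigma>))
     = (\<integral>\<^sup>+y. ennreal (normal_density 0 \<sigma> y) * ennreal (exp (s*y)) \<partial>lborel)"
    by (subst nn_integral_density) auto
  also have "\<dots> = (\<integral>\<^sup>+y. ennreal (exp (s\<^sup>2*\<sigma>\<^sup>2/2)) * ennreal (normal_density (s*\<sigma>\<^sup>2) \<sigma> y) \<partial>lborel)"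
    by (simp add: ennreal_mult'[symmetric] eq)
  also have "\<dots> = ennreal (exp (s\<^sup>2*\<sigma>\<^sup>2/2)) * (\<integral>\<^sup>+y. ennreal (normal_density (s*\<sigma>\<^sup>2) \<sigma> y) \<partial>lborel)"
    by (rule nn_integral_cmult) auto
  also have "(\<integral>\<^sup>+y. ennreal (normal_density (s*\<sigma>\<^sup>2) \<sigma> y) \<partial>lborel) = 1"
  proof -
    interpret p: prob_space "density lborel (normal_density (s*\<sigma>\<^sup>2) \<sigma>)"
      by (rule prob_space_normal_density[OF assms])
    have "emeasure (density lborel (normal_density (s*\<sigma>\<^sup>2) \<sigma>)) UNIV = 1"
      using p.emeasure_space_1 by simp
    then show ?thesis by (simp add: emeasure_density)
  qed
  finally show ?thesis by simp
qed

lemma chernoff_set: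
  fixes \<sigma> :: real and d :: "nat \<Rightarrow> real" and M :: nat
  assumes "0 < \<sigma>"
  defines "N \<equiv> density lborel (normal_density 0 \<sigma>)"
  defines "A \<equiv> {z \<in> space (PiM {..<M} (\<lambda>_. lborel :: real measure)).
              (\<Sum>i<M. (d i)\<^sup>2) + 2 * (\<Sum>i<M. d i * z i) \<le> 0}"
  shows "emeasure (PiM {..<M} (\<lambda>_. N)) A \<le> ennreal (exp (- (\<Sum>i<M. (d i)\<^sup>2) / (8 * \<sigma>\<^sup>2)))"
proof -
  define P where "P = PiM {..<M} (\<lambda>_. N)"
  define D where "D = (\<Sum>i<M. (d i)\<^sup>2)"
  define t where "t = 1 / (2 * \<sigma>\<^sup>2)"
  have t0: "t \<ge> 0" unfolding t_def by simp
  interpret Np: prob_space N unfolding N_def by (rule prob_space_normal_density[OF assms(1)])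
  interpret ps: product_sigma_finite "\<lambda>_::nat. N"
    unfolding product_sigma_finite_def using Np.sigma_finite_measure_axioms by simp
  have setsP: "sets P = sets (PiM {..<M} (\<lambda>_. lborel :: real measure))"
    unfolding P_def by (rule sets_PiM_cong) (auto simp: N_def)
  have spP: "space P = space (PiM {..<M} (\<lambda>_. lborel :: real measure))"
    using setsP by (rule sets_eq_imp_space_eq)
  have Ameas: "A \<in> sets (PiM {..<M} (\<lambda>_. lborel :: real measure))"
    unfolding A_def by measurable
  have "emeasure P A = (\<integral>\<^sup>+z. indicator A z \<partial>P)"
    using Ameas setsP by simp
  also have "\<dots> \<le> (\<integral>\<^sup>+z. ennreal (exp (-t*D/2)) * (\<Prod>i\<in>{..<M}. ennreal (exp (-t * d i * z i))) \<partial>P)"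
  proof (rule nn_integral_mono)
    fix z assume "z \<in> space P"
    have pe: "(\<Prod>i\<in>{..<M}. ennreal (exp (-t * d i * z i))) = ennreal (exp (\<Sum>i<M. -t * d i * z i))"
      by (simp add: prod_ennreal exp_sum)
    show "indicator A z \<le> ennreal (exp (-t*D/2)) * (\<Prod>i\<in>{..<M}. ennreal (exp (-t * d i * z i)))"
    proof (cases "z \<in> A")
      case True
      then have "D + 2 * (\<Sum>i<M. d i * z i) \<le> 0" unfolding A_def D_def by simp
      moreover have "(\<Sum>i<M. -t * d i * z i) = -t * (\<Sum>i<M. d i * z i)"
        by (simp add: sum_distrib_left mult.assoc)
      ultimately have "-t*D/2 + (\<Sum>i<M. -t * d i * z i) = (-t/2) * (D + 2 * (\<Sum>i<M. d i * z i))"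
        by (simp add: algebra_simps)
      moreover have "(-t/2) * (D + 2 * (\<Sum>i<M. d i * z i)) \<ge> 0"
        using t0 \<open>D + 2 * (\<Sum>i<M. d i * z i) \<le> 0\<close> by (intro mult_nonpos_nonpos) auto
      ultimately have "-t*D/2 + (\<Sum>i<M. -t * d i * z i) \<ge> 0" by simp
      then have "exp (-t*D/2 + (\<Sum>i<M. -t * d i * z i)) \<ge> 1" by simp
      then show ?thesis using True pe by (simp add: ennreal_mult'[symmetric] mult_exp_exp)
    qed simp
  qed
  also have "\<dots> = ennreal (exp (-t*D/2)) * (\<integral>\<^sup>+z. (\<Prod>i\<in>{..<M}. ennreal (exp (-t * d i * z i))) \<partial>P)"
    by (rule nn_integral_cmult) (simp add: P_def N_def)
  also have "(\<integral>\<^sup>+z. (\<Prod>i\<in>{..<M}. ennreal (exp (-t * d i * z i))) \<partial>P)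
      = (\<Prod>i\<in>{..<M}. (\<integral>\<^sup>+y. ennreal (exp ((-t * d i) * y)) \<partial>N))"
    unfolding P_def
  proof (rule ps.product_nn_integral_prod[of "{..<M}" "\<lambda>i y. ennreal (exp ((-t * d i) * y))"])
    fix i show "(\<lambda>y. ennreal (exp ((-t * d i) * y))) \<in> borel_measurable N" by (simp add: N_def)
  qed simp
  also have "\<dots> = (\<Prod>i\<in>{..<M}. ennreal (exp ((-t * d i)\<^sup>2 * \<sigma>\<^sup>2 / 2)))"
    unfolding N_def by (intro prod.cong refl mgf_normal[OF assms(1)])
  also have "\<dots> = ennreal (exp (\<Sum>i<M. (-t * d i)\<^sup>2 * \<sigma>\<^sup>2 / 2))"
    by (simp add: prod_ennreal exp_sum)
  also have "ennreal (exp (-t*D/2)) * \<dots> = ennreal (exp (-t*D/2 + (\<Sum>i<M. (-t * d i)\<^sup>2 * \<sigma>\<^sup>2 / 2)))"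
    by (simp add: ennreal_mult'[symmetric] mult_exp_exp)
  also have "-t*D/2 + (\<Sum>i<M. (-t * d i)\<^sup>2 * \<sigma>\<^sup>2 / 2) = - D / (8 * \<sigma>\<^sup>2)"
  proof -
    have "(\<Sum>i<M. (-t * d i)\<^sup>2 * \<sigma>\<^sup>2 / 2) = t\<^sup>2 * \<sigma>\<^sup>2 / 2 * D"
      unfolding D_def by (simp add: sum_distrib_left power_mult_distrib algebra_simps)
    then show ?thesis unfolding t_def using assms(1) by (simp add: field_simps power2_eq_square)
  qed
  finally show ?thesis unfolding P_def D_def .
qed


lemma sqdist_diff:
  assumes "i0 = 0"
  shows "sqdist M (observation M x z) (Hmul M u) - sqdist M (observation M x z) (Hmul M x)
    = (\<Sum>i<M. (Hmul M x i - Hmul M u i)\<^sup>2) + 2 * (\<Sum>i<M. (Hmul M x i - Hmul M u i) * z i)"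
proof -
  have "sqdist M (observation M x z) (Hmul M u) - sqdist M (observation M x z) (Hmul M x)
     = (\<Sum>i<M. (Hmul M x i - Hmul M u i + z i)\<^sup>2 - (z i)\<^sup>2)"
    unfolding sqdist_def observation_def by (simp add: sum_subtractf algebra_simps)
  also have "\<dots> = (\<Sum>i<M. (Hmul M x i - Hmul M u i)\<^sup>2 + 2 * ((Hmul M x i - Hmul M u i) * z i))"
    by (rule sum.cong) (auto simp: power2_eq_square algebra_simps)
  finally show ?thesis by (simp add: sum.distrib sum_distrib_left)
qed

lemma D_ge_4:
  assumes "M \<ge> 2" "x \<in> sign_vectors M" "u \<in> sign_vectors M" "u \<noteq> x"
  shows "(\<Sum>i<M. (Hmul M x i - Hmul M u i)\<^sup>2) \<ge> 4"
proof -
  define v where "v i = x i - u i" for i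
  define S where "S = (\<Sum>j<M. v j)"
  obtain j where j: "j < M" "x j \<noteq> u j"
    using assms(2,3,4) unfolding sign_vectors_def by (metis PiE_ext lessThan_iff)
  have "x j \<in> {-1,1}" "u j \<in> {-1,1}" using assms(2,3) j(1) unfolding sign_vectors_def by auto
  then have vj: "(v j)\<^sup>2 = 4" using j(2) unfolding v_def by auto
  have "(\<Sum>i<M. (Hmul M x i - Hmul M u i)\<^sup>2) = (\<Sum>i<M. (S - v i)\<^sup>2)"
    unfolding Hmul_def S_def v_def by (intro sum.cong) (auto simp: sum_subtractf algebra_simps)
  also have "\<dots> = (\<Sum>i<M. S\<^sup>2 - 2 * S * v i + (v i)\<^sup>2)"
    by (rule sum.cong) (auto simp: power2_eq_square algebra_simps)
  also have "\<dots> = real M * S\<^sup>2 - 2 * S * S + (\<Sum>i<M. (v i)\<^sup>2)"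
    by (simp add: sum.distrib sum_subtractf sum_distrib_left[symmetric] S_def)
  also have "\<dots> = (real M - 2) * S\<^sup>2 + (\<Sum>i<M. (v i)\<^sup>2)"
    by (simp add: power2_eq_square algebra_simps)
  also have "\<dots> \<ge> (\<Sum>i<M. (v i)\<^sup>2)"
    using assms(1) by simp
  finally have "(\<Sum>i<M. (Hmul M x i - Hmul M u i)\<^sup>2) \<ge> (\<Sum>i<M. (v i)\<^sup>2)" .
  moreover have "(\<Sum>i<M. (v i)\<^sup>2) \<ge> (v j)\<^sup>2"
    by (rule member_le_sum) (use j in auto)
  ultimately show ?thesis using vj by simp
qed

theorem theorem1:
  fixes M K \<alpha> :: nat and \<eta> \<epsilon> :: real and x :: "nat \<Rightarrow> real"
  assumes "M \<ge> 2"
    and "0 < \<eta>" "\<eta> < 1" "\<eta> \<noteq> 1/2"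
    and "0 < \<epsilon>" "\<epsilon> < 1"
    and "real \<alpha> / (real (M + K) - 1) \<ge> 8 * \<eta> * (1 - \<eta>) / (1 - 2 * \<eta>)\<^sup>2 * ln (2 ^ M / \<epsilon>)"
    and "x \<in> sign_vectors M"
  shows "decoding_error_event M x \<in> sets (noise_measure M (sqrt (noise_var M K \<alpha> \<eta>)))
    \<and> measure (noise_measure M (sqrt (noise_var M K \<alpha> \<eta>))) (decoding_error_event M x) \<le> \<epsilon>"
proof -
  define c where "c = \<eta> * (1 - \<eta>) / (1 - 2 * \<eta>)\<^sup>2"
  define m where "m = real (M + K) - 1"
  define L where "L = ln (2 ^ M / \<epsilon>)"
  define v where "v = noise_var M K \<alpha> \<eta>"
  define \<sigma> where "\<sigma> = sqrt v"
  have c0: "c > 0" unfolding c_def using assms(2,3,4) by (auto intro!: divide_pos_pos mult_pos_pos)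
  have m1: "m \<ge> 1" unfolding m_def using assms(1) by simp
  have "(2::real) ^ M / \<epsilon> > 1" using assms(5,6) assms(1)
    by (simp add: field_simps) (smt (verit) one_le_power)
  then have L0: "L > 0" unfolding L_def by simp
  have hyp: "real \<alpha> / m \<ge> 8 * c * L"
    using assms(7) unfolding c_def m_def L_def by (simp add: algebra_simps)
  have a0: "real \<alpha> > 0"
  proof (rule ccontr)
    assume "\<not> real \<alpha> > 0" then have "real \<alpha> = 0" by simp
    moreover have "8 * c * L > 0" using c0 L0 by simp
    ultimately show False using hyp by simp
  qed
  have v_eq: "v = 4 * m / real \<alpha> * c" unfolding v_def noise_var_def m_def c_def by simp
  have v0: "v > 0" unfolding v_eq using a0 m1 c0 by simp
  have s0: "\<sigma> > 0" unfolding \<sigma>_def using v0 by simp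
  have s2: "\<sigma>\<^sup>2 = v" unfolding \<sigma>_def using v0 by simp
  define N where "N = density lborel (normal_density 0 \<sigma>)"
  define P where "P = PiM {..<M} (\<lambda>_. N)"
  have P_eq: "noise_measure M (sqrt (noise_var M K \<alpha> \<eta>)) = P"
    unfolding P_def N_def noise_measure_def \<sigma>_def v_def ..
  interpret Np: prob_space N unfolding N_def by (rule prob_space_normal_density[OF s0])
  interpret Pp: prob_space P unfolding P_def by (rule prob_space_PiM) (rule Np.prob_space_axioms)
  have setsP: "sets P = sets (PiM {..<M} (\<lambda>_. lborel :: real measure))"
    unfolding P_def by (rule sets_PiM_cong) (auto simp: N_def)
  define d where "d u i = Hmul M x i - Hmul M u i" for u i
  define A where "A u = {z \<in> space (PiM {..<M} (\<lambda>_. lborel :: real measure)).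
              (\<Sum>i<M. (d u i)\<^sup>2) + 2 * (\<Sum>i<M. d u i * z i) \<le> 0}" for u
  define U where "U = sign_vectors M - {x}"
  have finU: "finite U" unfolding U_def sign_vectors_def by (auto intro!: finite_PiE)
  have key: "(sqdist M (observation M x z) (Hmul M u) \<le> sqdist M (observation M x z) (Hmul M x))
     = ((\<Sum>i<M. (d u i)\<^sup>2) + 2 * (\<Sum>i<M. d u i * z i) \<le> 0)" for u z
  proof -
    have "sqdist M (observation M x z) (Hmul M u) - sqdist M (observation M x z) (Hmul M x)
      = (\<Sum>i<M. (d u i)\<^sup>2) + 2 * (\<Sum>i<M. d u i * z i)"
      unfolding d_def by (rule sqdist_diff[of 0]) simp
    then show ?thesis by linarith
  qed
  have E_eq: "decoding_error_event M x = (\<Union>u\<in>U. A u)"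
    unfolding decoding_error_event_def A_def U_def key by blast
  have Ameas: "A u \<in> sets P" for u
    unfolding setsP A_def by measurable
  have Emeas: "decoding_error_event M x \<in> sets P"
    unfolding E_eq using finU Ameas by auto
  have bound: "emeasure P (A u) \<le> ennreal (exp (- 1 / (2 * v)))" if "u \<in> U" for u
  proof -
    have D4: "(\<Sum>i<M. (d u i)\<^sup>2) \<ge> 4"
      unfolding d_def using D_ge_4[OF assms(1) assms(8)] that unfolding U_def by auto
    have "emeasure P (A u) \<le> ennreal (exp (- (\<Sum>i<M. (d u i)\<^sup>2) / (8 * \<sigma>\<^sup>2)))"
      unfolding P_def N_def A_def by (rule chernoff_set[OF s0])
    also have "\<dots> \<le> ennreal (exp (- 1 / (2 * v)))"
      using D4 v0 s2 by (auto intro!: ennreal_leI simp: field_simps)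
    finally show ?thesis .
  qed
  have "emeasure P (decoding_error_event M x) \<le> (\<Sum>u\<in>U. emeasure P (A u))"
    unfolding E_eq using finU Ameas by (intro emeasure_subadditive_finite) auto
  also have "\<dots> \<le> (\<Sum>u\<in>U. ennreal (exp (- 1 / (2 * v))))"
    using bound by (rule sum_mono)
  also have "\<dots> = ennreal (real (card U) * exp (- 1 / (2 * v)))"
    by (simp add: ennreal_of_nat_eq_real_of_nat ennreal_mult)
  also have "\<dots> \<le> ennreal \<epsilon>"
  proof (rule ennreal_leI)
    have cardS: "card (sign_vectors M) = 2 ^ M"
      unfolding sign_vectors_def by (simp add: card_PiE numeral_2_eq_2)
    have "card U \<le> card (sign_vectors M)" unfolding U_def
      by (rule card_mono) (auto simp: sign_vectors_def intro!: finite_PiE)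
    then have cU: "real (card U) \<le> 2 ^ M" using cardS by (metis of_nat_le_iff of_nat_numeral of_nat_power)
    have "1 / (2 * v) = real \<alpha> / (8 * m * c)" unfolding v_eq using a0 m1 c0 by (simp add: field_simps)
    also have "\<dots> \<ge> L" using hyp m1 c0 by (simp add: field_simps)
    finally have "exp (- 1 / (2 * v)) \<le> exp (- L)" by simp
    also have "exp (- L) = \<epsilon> / 2 ^ M" unfolding L_def using assms(5)
      by (simp add: exp_minus ln_div exp_diff)
    finally have e: "exp (- 1 / (2 * v)) \<le> \<epsilon> / 2 ^ M" .
    have "real (card U) * exp (- 1 / (2 * v)) \<le> 2 ^ M * (\<epsilon> / 2 ^ M)"
      using cU e by (intro mult_mono) auto
    then show "real (card U) * exp (- 1 / (2 * v)) \<le> \<epsilon>" by simp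
  qed
  finally have "emeasure P (decoding_error_event M x) \<le> ennreal \<epsilon>" .
  then have "measure P (decoding_error_event M x) \<le> \<epsilon>"
    using assms(5) by (simp add: Pp.emeasure_eq_measure)
  then show ?thesis using Emeas P_eq by simp
qed

end
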